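(* Let $\mathcal{F}$ be a class of real functions on $\mathcal{X}$ and $(\mathbf{X}_i,Y_i)_{i=1}^n$ a sample. Let $\widehat g_1,\dots,\widehat g_d$ be $\Delta_1$-empirical risk minimizers in $\mathcal{F}$, and let $\widehat f$ be a $\Delta_2$-empirical risk minimizer in $Star_d(\mathcal{F},\widehat g_1,\dots,\widehat g_d)$. Then for any $h\in\mathcal{F}$, with $c=\frac1{36}$, $$\widehat{\mathbb{E}}(h-Y)^2-\widehat{\mathbb{E}}(\widehat f-Y)^2\ge c\,\widehat{\mathbb{E}}(\widehat f-h)^2-2(1+c)[\Delta_1+\Delta_2].$$
   Context: $\widehat{\mathbb{E}}(f)=\frac1n\sum_{i=1}^n f(\mathbf{X}_i)$ (and $\widehat{\mathbb{E}}(f-Y)^2=\frac1n\sum_i(f(\mathbf{X}_i)-Y_i)^2$). $\widehat g\in\mathcal{G}$ is a $\Delta$-empirical risk minimizer in $\mathcal{G}$ if $\widehat{\mathbb{E}}(\widehat g-Y)^2\le\min_{f\in\mathcal{G}}\widehat{\mathbb{E}}(f-Y)^2+\Delta$. $Star_d(\mathcal{F},\widehat g_1,\dots,\widehat g_d)=\{\sum_{i=1}^d\lambda_i\widehat g_i+(1-\sum_i\lambda_i)f:\lambda_i\in[0,1],\ 1-\sum_i\lambda_i\in[0,1],\ f\in\mathcal{F}\}$. *)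

theory Defs
  imports "HOL-Analysis.Analysis"
begin

definition emp_mean :: "nat \<Rightarrow> (nat \<Rightarrow> 'a) \<Rightarrow> ('a \<Rightarrow> real) \<Rightarrow> real" where
  "emp_mean n X f = (\<Sum>i=1..n. f (X i)) / real n"

definition emp_risk :: "nat \<Rightarrow> (nat \<Rightarrow> 'a) \<Rightarrow> (nat \<Rightarrow> real) \<Rightarrow> ('a \<Rightarrow> real) \<Rightarrow> real" where
  "emp_risk n X Y f = (\<Sum>i=1..n. (f (X i) - Y i)^2) / real n"

definition is_erm :: "nat \<Rightarrow> (nat \<Rightarrow> 'a) \<Rightarrow> (nat \<Rightarrow> real) \<Rightarrow> real \<Rightarrow> ('a \<Rightarrow> real) set \<Rightarrow> ('a \<Rightarrow> real) \<Rightarrow> bool" where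
  "is_erm n X Y \<Delta> G g \<longleftrightarrow> g \<in> G \<and> (\<forall>f\<in>G. emp_risk n X Y g \<le> emp_risk n X Y f + \<Delta>)"

definition star_d :: "nat \<Rightarrow> ('a \<Rightarrow> real) set \<Rightarrow> (nat \<Rightarrow> ('a \<Rightarrow> real)) \<Rightarrow> ('a \<Rightarrow> real) set" where
  "star_d d F g = {(\<lambda>x. (\<Sum>i=1..d. lam i * g i x) + (1 - (\<Sum>i=1..d. lam i)) * f x) | lam f.
      (\<forall>i\<in>{1..d}. 0 \<le> lam i \<and> lam i \<le> 1) \<and> 0 \<le> 1 - (\<Sum>i=1..d. lam i) \<and> 1 - (\<Sum>i=1..d. lam i) \<le> 1 \<and> f \<in> F}"

end

theory Submission
  imports Defs
begin

lemma mid_risk: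
  "emp_risk n X Y (\<lambda>x. (f x + k x)/2) = (emp_risk n X Y f + emp_risk n X Y k)/2
     - emp_mean n X (\<lambda>x. (f x - k x)^2)/4"
proof -
  have "(\<Sum>i=1..n. ((f (X i) + k (X i))/2 - Y i)^2) =
        (\<Sum>i=1..n. ((f (X i) - Y i)^2/2 + (k (X i) - Y i)^2/2 - (f (X i) - k (X i))^2/4))"
    by (rule sum.cong) (auto simp: power2_eq_square field_simps)
  also have "\<dots> = (\<Sum>i=1..n. (f (X i) - Y i)^2)/2 + (\<Sum>i=1..n. (k (X i) - Y i)^2)/2
      - (\<Sum>i=1..n. (f (X i) - k (X i))^2)/4"
    by (simp add: sum.distrib sum_subtractf sum_divide_distrib)
  finally have eq: "(\<Sum>i=1..n. ((f (X i) + k (X i))/2 - Y i)^2) = (\<Sum>i=1..n. (f (X i) - Y i)^2)/2 + (\<Sum>i=1..n. (k (X i) - Y i)^2)/2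
      - (\<Sum>i=1..n. (f (X i) - k (X i))^2)/4" .
  show ?thesis unfolding emp_risk_def emp_mean_def eq by (simp add: diff_divide_distrib add_divide_distrib)
qed

lemma tri:
  "emp_mean n X (\<lambda>x. (f x - k x)^2) \<le> 2 * emp_mean n X (\<lambda>x. (f x - m x)^2)
     + 2 * emp_mean n X (\<lambda>x. (m x - k x)^2)"
proof -
  have "(\<Sum>i=1..n. (f (X i) - k (X i))^2) \<le> (\<Sum>i=1..n. 2*(f (X i) - m (X i))^2 + 2*(m (X i) - k (X i))^2)"
  proof (rule sum_mono)
    fix i
    have "0 \<le> (f (X i) - 2 * m (X i) + k (X i))^2" by simp
    then show "(f (X i) - k (X i))^2 \<le> 2*(f (X i) - m (X i))^2 + 2*(m (X i) - k (X i))^2"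
      by (simp add: power2_eq_square algebra_simps)
  qed
  also have "\<dots> = 2*(\<Sum>i=1..n. (f (X i) - m (X i))^2) + 2*(\<Sum>i=1..n. (m (X i) - k (X i))^2)"
    by (simp add: sum.distrib sum_distrib_left)
  finally show ?thesis unfolding emp_mean_def
    by (simp add: divide_right_mono add_divide_distrib[symmetric] del: add_divide_distrib)
qed

lemma jensen_risk:
  fixes d :: nat and w :: "nat \<Rightarrow> real"
  assumes "d \<ge> 1" "(\<Sum>i=1..d. w i) = 1" "\<And>i. i \<in> {1..d} \<Longrightarrow> w i \<ge> 0"
  shows "emp_risk n X Y (\<lambda>x. \<Sum>j=1..d. w j * g j x) \<le> (\<Sum>j=1..d. w j * emp_risk n X Y (g j))"
proof -
  have pt: "((\<Sum>j=1..d. w j * g j (X i)) - Y i)^2 \<le> (\<Sum>j=1..d. w j * (g j (X i) - Y i)^2)" for i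
  proof -
    have "(\<Sum>j=1..d. w j * g j (X i)) - Y i = (\<Sum>j=1..d. w j * (g j (X i) - Y i))"
    proof -
      have "(\<Sum>j=1..d. w j * (g j (X i) - Y i)) = (\<Sum>j=1..d. w j * g j (X i)) - (\<Sum>j=1..d. w j) * Y i"
        by (simp add: right_diff_distrib sum_subtractf sum_distrib_right)
      then show ?thesis using assms(2) by simp
    qed
    moreover have "(\<Sum>j=1..d. w j *\<^sub>R (g j (X i) - Y i))^2 \<le> (\<Sum>j=1..d. w j * (g j (X i) - Y i)^2)"
    proof -
      have ne: "{1..d} \<noteq> {}" using assms(1) by (metis atLeastAtMost_iff empty_iff order_refl)
      show ?thesis
        using convex_on_sum[OF finite_atLeastAtMost ne convex_power2 assms(2), of "\<lambda>j. g j (X i) - Y i"] assms(3)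
        by auto
    qed
    ultimately show ?thesis by simp
  qed
  have "(\<Sum>i=1..n. ((\<Sum>j=1..d. w j * g j (X i)) - Y i)^2) \<le> (\<Sum>i=1..n. \<Sum>j=1..d. w j * (g j (X i) - Y i)^2)"
    by (rule sum_mono) (rule pt)
  also have "\<dots> = (\<Sum>j=1..d. w j * (\<Sum>i=1..n. (g j (X i) - Y i)^2))"
    by (subst sum.swap) (simp add: sum_distrib_left)
  finally have "(\<Sum>i=1..n. ((\<Sum>j=1..d. w j * g j (X i)) - Y i)^2) / real n
      \<le> (\<Sum>j=1..d. w j * (\<Sum>i=1..n. (g j (X i) - Y i)^2)) / real n"
    by (simp add: divide_right_mono)
  then show ?thesis unfolding emp_risk_def
    by (simp only: sum_divide_distrib[symmetric] times_divide_eq_right)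
qed

theorem lemma2:
  fixes F :: "('a \<Rightarrow> real) set" and X :: "nat \<Rightarrow> 'a" and Y :: "nat \<Rightarrow> real"
    and n d :: nat and g :: "nat \<Rightarrow> ('a \<Rightarrow> real)" and fhat h :: "'a \<Rightarrow> real"
    and \<Delta>1 \<Delta>2 :: real
  assumes "n \<ge> 1" and "d \<ge> 1"
    and "\<forall>i\<in>{1..d}. is_erm n X Y \<Delta>1 F (g i)"
    and "is_erm n X Y \<Delta>2 (star_d d F g) fhat"
    and "h \<in> F"
  shows "emp_risk n X Y h - emp_risk n X Y fhat
     \<ge> (1/36) * emp_mean n X (\<lambda>x. (fhat x - h x)^2) - 2 * (1 + 1/36) * (\<Delta>1 + \<Delta>2)"
proof -
  define R where "R = emp_risk n X Y"
  define D where "D = (\<lambda>f k. emp_mean n X (\<lambda>x. (f x - k x)^2 :: real))"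
  have g1: "is_erm n X Y \<Delta>1 F (g 1)" using assms(2,3) by auto
  then have D1: "\<Delta>1 \<ge> 0" unfolding is_erm_def by auto
  have D2: "\<Delta>2 \<ge> 0" using assms(4) unfolding is_erm_def by auto
  have fS: "fhat \<in> star_d d F g" and fmin: "\<And>q. q \<in> star_d d F g \<Longrightarrow> R fhat \<le> R q + \<Delta>2"
    using assms(4) unfolding is_erm_def R_def by auto
  obtain lam f where fh: "fhat = (\<lambda>x. (\<Sum>i=1..d. lam i * g i x) + (1 - (\<Sum>i=1..d. lam i)) * f x)"
    and lam01: "\<forall>i\<in>{1..d}. 0 \<le> lam i \<and> lam i \<le> 1" and L1: "0 \<le> 1 - (\<Sum>i=1..d. lam i)"
    and fF: "f \<in> F"
    using fS unfolding star_d_def by blast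
  define L where "L = (\<Sum>i=1..d. lam i)"
  have L0: "L \<ge> 0" unfolding L_def using lam01 by (auto intro: sum_nonneg)
  define w where "w = (\<lambda>i. if L = 0 then (if i = 1 then 1 else 0) else lam i / L)"
  have wsum: "(\<Sum>i=1..d. w i) = 1"
  proof (cases "L = 0")
    case True then show ?thesis using assms(2) by (simp add: w_def)
  next
    case False then show ?thesis by (simp add: w_def sum_divide_distrib[symmetric] L_def)
  qed
  have wnn: "\<And>i. i \<in> {1..d} \<Longrightarrow> w i \<ge> 0" using lam01 L0 by (auto simp: w_def)
  have wle: "\<And>i. i \<in> {1..d} \<Longrightarrow> w i \<le> 1"
  proof -
    fix i assume i: "i \<in> {1..d}"
    have "w i \<le> (\<Sum>j=1..d. w j)" by (rule member_le_sum) (use i wnn in auto)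
    then show "w i \<le> 1" using wsum by simp
  qed
  define \<alpha> where "\<alpha> = (\<lambda>x. \<Sum>j=1..d. w j * g j x)"
  have lamw: "\<And>i. i \<in> {1..d} \<Longrightarrow> lam i = L * w i"
  proof -
    fix i assume i: "i \<in> {1..d}"
    show "lam i = L * w i"
    proof (cases "L = 0")
      case True
      have "\<forall>j\<in>{1..d}. lam j = 0"
        using True unfolding L_def using lam01 by (subst sum_nonneg_eq_0_iff[symmetric]) auto
      then show ?thesis using i True by (simp add: w_def)
    qed (simp add: w_def)
  qed
  have fhx: "\<And>x. fhat x = L * \<alpha> x + (1 - L) * f x"
  proof -
    fix x
    have "(\<Sum>i=1..d. lam i * g i x) = (\<Sum>i=1..d. L * (w i * g i x))"
      by (rule sum.cong) (auto simp: lamw)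
    then show "fhat x = L * \<alpha> x + (1 - L) * f x"
      unfolding fh \<alpha>_def L_def by (simp add: sum_distrib_left[symmetric] L_def)
  qed
  have M1: "(\<lambda>x. (\<alpha> x + fhat x)/2) \<in> star_d d F g"
  proof -
    define lam' where "lam' = (\<lambda>i. (1 + L)/2 * w i)"
    have s: "(\<Sum>i=1..d. lam' i) = (1 + L)/2"
      unfolding lam'_def sum_distrib_left[symmetric] wsum by simp
    have eq: "(\<lambda>x. (\<alpha> x + fhat x)/2) = (\<lambda>x. (\<Sum>i=1..d. lam' i * g i x) + (1 - (\<Sum>i=1..d. lam' i)) * f x)"
    proof
      fix x
      have "(\<Sum>i=1..d. lam' i * g i x) = (1 + L)/2 * \<alpha> x"
        unfolding lam'_def \<alpha>_def by (simp add: sum_distrib_left mult.assoc)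
      then show "(\<alpha> x + fhat x)/2 = (\<Sum>i=1..d. lam' i * g i x) + (1 - (\<Sum>i=1..d. lam' i)) * f x"
        using fhx[of x] s by (simp add: field_simps)
    qed
    have "\<forall>i\<in>{1..d}. 0 \<le> lam' i \<and> lam' i \<le> 1"
    proof
      fix i assume i: "i \<in> {1..d}"
      have "(1 + L)/2 \<le> 1" using L1 unfolding L_def by simp
      moreover have "(1+L)/2 \<ge> 0" using L0 by simp
      ultimately show "0 \<le> lam' i \<and> lam' i \<le> 1"
      proof -
        have "(1+L)*w i \<le> 2*1" using wnn[OF i] wle[OF i] L1 L0 unfolding L_def by (intro mult_mono) auto
        then show ?thesis unfolding lam'_def using wnn[OF i] L0 by simp
      qed
    qed
    moreover have "0 \<le> 1 - (\<Sum>i=1..d. lam' i) \<and> 1 - (\<Sum>i=1..d. lam' i) \<le> 1"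
      using s L0 L1 unfolding L_def by simp
    ultimately show ?thesis unfolding eq star_d_def using fF by blast
  qed
  have M2: "(\<lambda>x. (\<alpha> x + h x)/2) \<in> star_d d F g"
  proof -
    define lam' where "lam' = (\<lambda>i. w i / 2)"
    have s: "(\<Sum>i=1..d. lam' i) = 1/2"
      unfolding lam'_def sum_divide_distrib[symmetric] wsum by simp
    have eq: "(\<lambda>x. (\<alpha> x + h x)/2) = (\<lambda>x. (\<Sum>i=1..d. lam' i * g i x) + (1 - (\<Sum>i=1..d. lam' i)) * h x)"
    proof
      fix x
      have "(\<Sum>i=1..d. lam' i * g i x) = \<alpha> x / 2"
        unfolding lam'_def \<alpha>_def by (simp add: sum_divide_distrib)
      then show "(\<alpha> x + h x)/2 = (\<Sum>i=1..d. lam' i * g i x) + (1 - (\<Sum>i=1..d. lam' i)) * h x"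
        using s by (simp add: field_simps)
    qed
    have "\<forall>i\<in>{1..d}. 0 \<le> lam' i \<and> lam' i \<le> 1"
      unfolding lam'_def using wnn wle by fastforce
    moreover have "0 \<le> 1 - (\<Sum>i=1..d. lam' i) \<and> 1 - (\<Sum>i=1..d. lam' i) \<le> 1"
      using s by simp
    ultimately show ?thesis unfolding eq star_d_def using assms(5) by blast
  qed
  have E1: "R fhat \<le> (R \<alpha> + R fhat)/2 - D \<alpha> fhat/4 + \<Delta>2"
    using fmin[OF M1] mid_risk[of n X Y \<alpha> fhat] unfolding R_def D_def by simp
  have E2: "R fhat \<le> (R \<alpha> + R h)/2 - D \<alpha> h/4 + \<Delta>2"
    using fmin[OF M2] mid_risk[of n X Y \<alpha> h] unfolding R_def D_def by simp
  have "R \<alpha> \<le> (\<Sum>j=1..d. w j * R (g j))"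
    unfolding R_def \<alpha>_def by (rule jensen_risk[OF assms(2) wsum wnn])
  also have "\<dots> \<le> (\<Sum>j=1..d. w j * (R h + \<Delta>1))"
  proof (rule sum_mono)
    fix j assume j: "j \<in> {1..d}"
    have "R (g j) \<le> R h + \<Delta>1" using assms(3) j assms(5) unfolding is_erm_def R_def by blast
    then show "w j * R (g j) \<le> w j * (R h + \<Delta>1)" using wnn[OF j] by (rule mult_left_mono)
  qed
  also have "\<dots> = R h + \<Delta>1" unfolding sum_distrib_right[symmetric] wsum by simp
  finally have E3: "R \<alpha> \<le> R h + \<Delta>1" .
  have E4: "D fhat h \<le> 2 * D fhat \<alpha> + 2 * D \<alpha> h" unfolding D_def by (rule tri)
  have Dnn: "D \<alpha> h \<ge> 0" unfolding D_def emp_mean_def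
    by (rule divide_nonneg_nonneg) (simp_all add: sum_nonneg)
  have sym: "D fhat \<alpha> = D \<alpha> fhat" unfolding D_def by (simp add: power2_commute)
  have "R h - R fhat \<ge> (1/36) * D fhat h - 2 * (1 + 1/36) * (\<Delta>1 + \<Delta>2)"
    using E1 E2 E3 E4 sym D1 D2 Dnn by (simp only: sym) argo
  then show ?thesis unfolding R_def D_def .
qed

end
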